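(* Let $q$ be a complex number with $|q|<1$, and let $x,y$ be nonzero complex numbers such that $xq^k\neq 1$ and $yq^k\neq 1$ for all integers $k\geq 1$. Then \[ \sum_{i,j\in\mathbb{Z}} \frac{x^i y^j q^{i^2-ij+j^2}}{(xq;q)_i\,(yq;q)_j} = \frac{(q;q)_\infty\,(-xyq,\,-q/(xy),\,q^2;q^2)_\infty}{(xq,\,yq;q)_\infty}. \]
   Context: The $q$-shifted factorials are defined by $(a;q)_0=1$, $(a;q)_n=\prod_{k=0}^{n-1}(1-aq^k)$ for $n\geq 1$, $(a;q)_\infty=\prod_{k=0}^{\infty}(1-aq^k)$, and for negative subscripts $(a;q)_{-n}=1/(aq^{-n};q)_n$ for $n\geq1$ (so $1/(a;q)_{-n}=(aq^{-n};q)_n$). Products are abbreviated as $(a_1,\dots,a_m;q)_k=(a_1;q)_k\cdots(a_m;q)_k$ for $k\in\mathbb{Z}\cup\{\infty\}$. *)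

theory Defs
  imports "HOL-Analysis.Analysis"
begin

definition qpoch :: "complex \<Rightarrow> complex \<Rightarrow> nat \<Rightarrow> complex" where
  "qpoch a q n = (\<Prod>k<n. 1 - a * q ^ k)"

definition qpoch_int :: "complex \<Rightarrow> complex \<Rightarrow> int \<Rightarrow> complex" where
  "qpoch_int a q i =
     (if 0 \<le> i then qpoch a q (nat i)
      else 1 / qpoch (a * q powi i) q (nat (- i)))"

definition qpoch_inf :: "complex \<Rightarrow> complex \<Rightarrow> complex" where
  "qpoch_inf a q = (\<Prod>k. 1 - a * q ^ k)"

end

theory Submission
  imports Defs
begin

definition tri :: "nat \<Rightarrow> nat" where "tri k = k * (k - 1) div 2"
definition ep :: "complex \<Rightarrow> nat \<Rightarrow> complex" where
  "ep p k = (-1)^k * p^(tri k) / qpoch p p k"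
definition Ef :: "complex \<Rightarrow> complex \<Rightarrow> complex" where
  "Ef p a = (\<Sum>k. ep p k * a^k)"

lemma tri_Suc: "tri (Suc k) = tri k + k"
proof -
  have "Suc k * k = k * (k - 1) + 2 * k" by (cases k) (auto simp: algebra_simps)
  then show ?thesis unfolding tri_def by simp
qed

lemma tri_0[simp]: "tri 0 = 0" by (simp add: tri_def)

lemma qpoch_0[simp]: "qpoch a q 0 = 1" by (simp add: qpoch_def)

lemma qpoch_Suc: "qpoch a q (Suc n) = qpoch a q n * (1 - a * q^n)"
  by (simp add: qpoch_def)

lemma qpoch_Suc': "qpoch a q (Suc n) = (1 - a) * qpoch (a * q) q n"
  unfolding qpoch_def by (subst prod.lessThan_Suc_shift) (simp add: mult.assoc)

lemma qpp_nonzero: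
  assumes "norm p < 1" shows "qpoch p p n \<noteq> 0"
proof -
  have "1 - p * p ^ m \<noteq> 0" for m
  proof
    assume "1 - p * p ^ m = 0"
    then have "p ^ Suc m = 1" by simp
    then have "norm p ^ Suc m = 1" by (metis norm_one norm_power)
    moreover have "norm p ^ Suc m < 1"
      using power_less_one_iff[of "norm p" "Suc m"] assms by (simp del: power_Suc)
    ultimately show False by simp
  qed
  then show ?thesis unfolding qpoch_def by (simp add: prod_zero_iff)
qed

lemma exp_le_one_minus:
  fixes s t :: real
  assumes "0 \<le> s" "s \<le> t" "t < 1"
  shows "exp (- (s / (1 - t))) \<le> 1 - s"
proof -
  define u where "u = s / (1 - t)"
  have u0: "0 \<le> u" using assms by (simp add: u_def)
  have "1 + u \<le> exp u" by (rule exp_ge_add_one_self)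
  then have "exp (-u) \<le> 1 / (1 + u)" using u0
    by (simp add: exp_minus divide_simps)
  also have "1 / (1 + u) = (1 - t) / (1 - t + s)" using assms
    by (simp add: u_def divide_simps)
  also have "\<dots> \<le> 1 - s"
  proof -
    have "0 \<le> s * (t - s)" using assms by simp
    then have "1 - t \<le> (1 - s) * (1 - t + s)"
      by (simp add: algebra_simps)
    then show ?thesis using assms by (simp add: divide_simps)
  qed
  finally show ?thesis by (simp add: u_def)
qed

lemma qpp_lower_aux:
  fixes t :: real
  assumes "0 \<le> t" "t < 1"
  shows "exp (- ((t - t ^ Suc n) / (1 - t)^2)) \<le> (\<Prod>m<n. 1 - t ^ Suc m)"
proof (induction n)
  case 0
  then show ?case by simp
next
  case (Suc n)
  have a: "exp (- (t ^ Suc n / (1 - t))) \<le> 1 - t ^ Suc n"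
    by (rule exp_le_one_minus) (use assms power_Suc_le_self[of t n] in \<open>auto\<close>)
  have "exp (- ((t - t ^ Suc (Suc n)) / (1 - t)^2))
      = exp (- ((t - t ^ Suc n) / (1 - t)^2)) * exp (- (t ^ Suc n / (1 - t)))"
  proof -
    have "(t - t ^ Suc (Suc n)) / (1 - t)^2 = (t - t ^ Suc n) / (1 - t)^2 + t ^ Suc n / (1 - t)"
    proof -
      have d: "(1 - t) \<noteq> 0" using assms by simp
      have "t ^ Suc n / (1 - t) = t ^ Suc n * (1 - t) / (1 - t)^2"
        using d by (simp add: power2_eq_square)
      moreover have "t - t ^ Suc (Suc n) = (t - t ^ Suc n) + t ^ Suc n * (1 - t)"
        by (simp add: algebra_simps)
      ultimately show ?thesis by (metis add_divide_distrib)
    qed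
    then show ?thesis by (simp add: exp_add[symmetric])
  qed
  also have "\<dots> \<le> (\<Prod>m<n. 1 - t ^ Suc m) * (1 - t ^ Suc n)"
    by (rule mult_mono[OF Suc.IH a]) (use assms in \<open>auto intro!: prod_nonneg mult_le_one power_le_one\<close>)
  finally show ?case by simp
qed

definition qK :: "complex \<Rightarrow> real" where
  "qK p = exp (norm p / (1 - norm p)^2)"

lemma qK_pos: "qK p > 0" by (simp add: qK_def)

lemma qpp_lower:
  assumes "norm p < 1"
  shows "1 / qK p \<le> norm (qpoch p p n)"
proof -
  let ?t = "norm p"
  have "1 / qK p = exp (- (?t / (1 - ?t)^2))" by (simp add: qK_def exp_minus field_simps)
  also have "\<dots> \<le> exp (- ((?t - ?t ^ Suc n) / (1 - ?t)^2))"
    using assms by (simp add: divide_right_mono)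
  also have "\<dots> \<le> (\<Prod>m<n. 1 - ?t ^ Suc m)"
    by (rule qpp_lower_aux) (use assms in auto)
  also have "\<dots> \<le> (\<Prod>m<n. norm (1 - p * p ^ m))"
  proof (rule prod_mono)
    fix m assume "m \<in> {..<n}"
    have "1 - ?t ^ Suc m \<le> norm (1 - p * p ^ m)"
      using norm_triangle_ineq2[of 1 "p ^ Suc m"] by (simp add: norm_power norm_mult norm_minus_commute)
    moreover have "0 \<le> 1 - ?t ^ Suc m" using assms power_le_one[of "norm p" "Suc m"] by (simp del: power_Suc)
    ultimately show "0 \<le> 1 - ?t ^ Suc m \<and> 1 - ?t ^ Suc m \<le> norm (1 - p * p ^ m)" by simp
  qed
  also have "\<dots> = norm (qpoch p p n)" by (simp add: qpoch_def prod_norm)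
  finally show ?thesis .
qed

lemma ep_bound:
  assumes "norm p < 1"
  shows "norm (ep p k) \<le> qK p * norm p ^ tri k"
proof -
  have pos: "0 < norm (qpoch p p k)" using qpp_nonzero[OF assms] by simp
  have "norm (ep p k) = norm p ^ tri k / norm (qpoch p p k)"
    by (simp add: ep_def norm_divide norm_mult norm_power)
  also have "\<dots> \<le> norm p ^ tri k / (1 / qK p)"
    by (rule divide_left_mono) (use qpp_lower[OF assms] pos qK_pos in \<open>auto\<close>)
  also have "\<dots> = qK p * norm p ^ tri k" by simp
  finally show ?thesis .
qed

lemma summable_tri:
  fixes t A :: real assumes "0 \<le> t" "t < 1" "0 \<le> A"
  shows "summable (\<lambda>k. t ^ tri k * A ^ k)"
proof -
  have "(\<lambda>k. A * t ^ k) \<longlonglongrightarrow> A * 0"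
    by (intro tendsto_mult tendsto_const LIMSEQ_realpow_zero) (use assms in auto)
  then have "eventually (\<lambda>k. A * t ^ k < 1/2) sequentially"
    by (intro order_tendstoD(2)) auto
  then obtain N where N: "\<And>k. k \<ge> N \<Longrightarrow> A * t ^ k < 1/2"
    by (auto simp: eventually_sequentially)
  show ?thesis
  proof (rule summable_ratio_test[of "1/2" N])
    fix n assume "n \<ge> N"
    have e: "t ^ tri (Suc n) * A ^ Suc n = (t ^ tri n * A ^ n) * (A * t ^ n)"
      by (simp add: tri_Suc power_add algebra_simps)
    have nn: "0 \<le> t ^ tri n * A ^ n" using assms by simp
    have "norm (t ^ tri (Suc n) * A ^ Suc n) = (t ^ tri n * A ^ n) * (A * t ^ n)"
      using e assms by simp
    also have "\<dots> \<le> (t ^ tri n * A ^ n) * (1/2)"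
      by (rule mult_left_mono) (use N[OF \<open>n \<ge> N\<close>] nn in auto)
    also have "\<dots> = 1/2 * norm (t ^ tri n * A ^ n)" using nn by simp
    finally show "norm (t ^ tri (Suc n) * A ^ Suc n) \<le> 1/2 * norm (t ^ tri n * A ^ n)" .
  qed simp
qed

lemma Ef_summable:
  assumes "norm p < 1"
  shows "summable (\<lambda>k. norm (ep p k * a ^ k))"
proof (rule summable_comparison_test')
  show "summable (\<lambda>k. qK p * (norm p ^ tri k * norm a ^ k))"
    by (intro summable_mult summable_tri) (use assms in auto)
  fix k :: nat
  have "norm (norm (ep p k * a ^ k)) = norm (ep p k) * norm a ^ k"
    by (simp add: norm_mult norm_power)
  also have "\<dots> \<le> qK p * norm p ^ tri k * norm a ^ k"
    by (rule mult_right_mono[OF ep_bound[OF assms]]) simp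
  finally show "norm (norm (ep p k * a ^ k)) \<le> qK p * (norm p ^ tri k * norm a ^ k)"
    by (simp add: mult.assoc)
qed

lemma Ef_sums:
  assumes "norm p < 1"
  shows "(\<lambda>k. ep p k * a ^ k) sums Ef p a"
  unfolding Ef_def using summable_norm_cancel[OF Ef_summable[OF assms]]
  by (rule summable_sums)

lemma ep_0[simp]: "ep p 0 = 1" by (simp add: ep_def)

lemma ep_Suc:
  assumes "norm p < 1"
  shows "ep p (Suc k) * (1 - p ^ Suc k) = - (p ^ k * ep p k)"
proof -
  have nz: "1 - p * p ^ k \<noteq> 0"
    using qpp_nonzero[OF assms, of "Suc k"] by (simp add: qpoch_Suc)
  have nz2: "qpoch p p k \<noteq> 0" using qpp_nonzero[OF assms] .
  show ?thesis
    using nz nz2 by (simp add: ep_def qpoch_Suc tri_Suc power_add field_simps)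
qed

lemma Ef_func:
  assumes "norm p < 1"
  shows "Ef p a = (1 - a) * Ef p (a * p)"
proof -
  define s where "s k = ep p k * (a * p) ^ k" for k
  define S where "S = Ef p (a * p)"
  have sS: "s sums S" unfolding s_def S_def by (rule Ef_sums[OF assms])
  define g where "g k = (if k = 0 then 0 else a * s (k - 1))" for k
  have "(\<lambda>n. g (Suc n)) sums (a * S)" unfolding g_def using sums_mult[OF sS, of a] by simp
  then have gS: "g sums (a * S)" by (subst (asm) sums_Suc_iff) (simp add: g_def)
  have "(\<lambda>k. s k - g k) sums (S - a * S)" by (rule sums_diff[OF sS gS])
  moreover have "s k - g k = ep p k * a ^ k" for k
  proof (cases k)
    case 0 then show ?thesis by (simp add: s_def g_def)
  next
    case (Suc m)
    have "ep p (Suc m) = ep p (Suc m) * p ^ Suc m - p ^ m * ep p m"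
      using ep_Suc[OF assms, of m] by (simp add: algebra_simps)
    then have "ep p (Suc m) * a ^ Suc m = (ep p (Suc m) * p ^ Suc m - p ^ m * ep p m) * a ^ Suc m"
      by simp
    then show ?thesis using Suc by (simp add: s_def g_def power_mult_distrib algebra_simps)
  qed
  ultimately have "(\<lambda>k. ep p k * a ^ k) sums (S - a * S)" by simp
  then have "Ef p a = S - a * S" using Ef_sums[OF assms] sums_unique2 by blast
  then show ?thesis by (simp add: S_def algebra_simps)
qed

lemma Ef_split:
  assumes "norm p < 1"
  shows "Ef p a = qpoch a p n * Ef p (a * p ^ n)"
proof (induction n)
  case 0 then show ?case by simp
next
  case (Suc n)
  have e: "Ef p (a * p ^ n) = (1 - a * p ^ n) * Ef p (a * p ^ Suc n)"
    using Ef_func[OF assms, of "a * p ^ n"] by (simp add: ac_simps)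
  show ?case by (metis (no_types) Suc.IH e qpoch_Suc mult.assoc)
qed

lemma Ef_zero[simp]: "Ef p 0 = 1"
  unfolding Ef_def by (subst powser_zero) simp

lemma Ef_isCont:
  assumes "norm p < 1"
  shows "isCont (Ef p) z"
proof -
  have "isCont (\<lambda>x. \<Sum>n. ep p n * x ^ n) z"
    by (rule isCont_powser_converges_everywhere) (rule summable_norm_cancel[OF Ef_summable[OF assms]])
  then show ?thesis unfolding Ef_def[abs_def] .
qed

lemma Ef_lim:
  assumes "norm p < 1"
  shows "(\<lambda>n. Ef p (a * p ^ n)) \<longlonglongrightarrow> 1"
proof -
  have "(\<lambda>n. a * p ^ n) \<longlonglongrightarrow> a * 0"
    by (intro tendsto_mult tendsto_const LIMSEQ_power_zero assms)
  then have "(\<lambda>n. Ef p (a * p ^ n)) \<longlonglongrightarrow> Ef p (a * 0)"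
    by (rule isCont_tendsto_compose[OF Ef_isCont[OF assms]])
  then show ?thesis by simp
qed

lemma qpoch_inf_Ef:
  assumes "norm p < 1"
  shows "qpoch_inf a p = Ef p a"
proof -
  define f where "f k = 1 - a * p ^ k" for k
  have "summable (\<lambda>k. norm (f k - 1))"
    unfolding f_def by (simp add: norm_mult norm_power summable_mult summable_geometric assms)
  then have cp: "convergent_prod f"
    by (intro abs_convergent_prod_imp_convergent_prod summable_imp_abs_convergent_prod)
  have L1: "(\<lambda>n. qpoch a p (Suc n)) \<longlonglongrightarrow> prodinf f"
    using convergent_prod_LIMSEQ[OF cp] by (simp add: qpoch_def f_def lessThan_Suc_atMost)
  have ev: "eventually (\<lambda>n. Ef p (a * p ^ n) \<noteq> 0) sequentially"
    using Ef_lim[OF assms] by (rule tendsto_imp_eventually_ne) simp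
  have "(\<lambda>n. Ef p a / Ef p (a * p ^ n)) \<longlonglongrightarrow> Ef p a / 1"
    by (intro tendsto_divide tendsto_const Ef_lim assms) simp
  moreover have "eventually (\<lambda>n. Ef p a / Ef p (a * p ^ n) = qpoch a p n) sequentially"
    using ev
  proof eventually_elim
    case (elim n)
    then show ?case using Ef_split[OF assms, of a n] by (simp add: field_simps)
  qed
  ultimately have "(\<lambda>n. qpoch a p n) \<longlonglongrightarrow> Ef p a / 1" by (rule Lim_transform_eventually)
  then have "(\<lambda>n. qpoch a p n) \<longlonglongrightarrow> Ef p a" by simp
  then have "(\<lambda>n. qpoch a p (Suc n)) \<longlonglongrightarrow> Ef p a" by (rule LIMSEQ_Suc)
  then have "prodinf f = Ef p a" using L1 LIMSEQ_unique by blast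
  then show ?thesis unfolding qpoch_inf_def f_def[abs_def] .
qed

definition qbF :: "complex \<Rightarrow> nat \<Rightarrow> complex \<Rightarrow> complex" where
  "qbF q n z = (\<Sum>k\<le>n. ep q k * z ^ k / qpoch q q (n - k))"

lemma qbF_step:
  assumes q: "norm q < 1"
  shows "qbF q (Suc n) z * (1 - q ^ Suc n) = (1 - z) * qbF q n (q * z)"
proof -
  define u where "u k = (if k \<le> n then ep q k * z ^ k * q ^ k / qpoch q q (n - k) else 0)" for k
  define v where "v k = ep q k * z ^ k * (1 - q ^ k) / qpoch q q (Suc n - k)" for k
  have tm: "ep q k * z ^ k / qpoch q q (Suc n - k) * (1 - q ^ Suc n) = u k + v k"
    if "k \<le> Suc n" for k
  proof (cases "k \<le> n")
    case True
    then obtain m where m: "n = k + m" by (metis le_add_diff_inverse)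
    have nz1: "qpoch q q m \<noteq> 0" using qpp_nonzero[OF q] .
    have nz2: "1 - q * q ^ m \<noteq> 0" using qpp_nonzero[OF q, of "Suc m"] by (simp add: qpoch_Suc)
    have s: "Suc n - k = Suc m" "n - k = m" using m by auto
    show ?thesis using True nz1 nz2
      by (simp add: u_def v_def s qpoch_Suc m power_add field_simps)
  next
    case False
    then have "k = Suc n" using that by simp
    then show ?thesis by (simp add: u_def v_def)
  qed
  have "qbF q (Suc n) z * (1 - q ^ Suc n) = (\<Sum>k\<le>Suc n. u k + v k)"
    unfolding qbF_def sum_distrib_right by (rule sum.cong) (use tm in auto)
  also have "\<dots> = (\<Sum>k\<le>Suc n. u k) + (\<Sum>k\<le>Suc n. v k)" by (rule sum.distrib)
  also have "(\<Sum>k\<le>Suc n. u k) = qbF q n (q * z)"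
    by (simp add: u_def qbF_def power_mult_distrib mult_ac)
  also have "(\<Sum>k\<le>Suc n. v k) = - z * qbF q n (q * z)"
  proof -
    have "(\<Sum>k\<le>Suc n. v k) = (\<Sum>k\<le>n. v (Suc k)) + v 0" by (simp only: sum.atMost_Suc_shift add.commute)
    also have "v 0 = 0" by (simp add: v_def)
    also have "v (Suc k) = - z * (ep q k * (q * z) ^ k / qpoch q q (n - k))" for k
    proof -
      have "v (Suc k) = (ep q (Suc k) * (1 - q ^ Suc k)) * z ^ Suc k / qpoch q q (n - k)"
        by (simp add: v_def mult_ac)
      also have "\<dots> = - (q ^ k * ep q k) * z ^ Suc k / qpoch q q (n - k)"
        by (simp only: ep_Suc[OF q])
      finally show ?thesis by (simp add: power_mult_distrib mult_ac)
    qed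
    then have "(\<Sum>k\<le>n. v (Suc k)) = - z * qbF q n (q * z)"
      by (simp add: qbF_def sum_distrib_left)
    finally show ?thesis by simp
  qed
  finally show ?thesis by (simp add: algebra_simps)
qed

lemma qbin:
  assumes q: "norm q < 1"
  shows "qbF q n z = qpoch z q n / qpoch q q n"
proof (induction n arbitrary: z)
  case 0
  then show ?case by (simp add: qbF_def)
next
  case (Suc n)
  have nz1: "qpoch q q n \<noteq> 0" using qpp_nonzero[OF q] .
  have nz2: "1 - q * q ^ n \<noteq> 0" using qpp_nonzero[OF q, of "Suc n"] by (simp add: qpoch_Suc)
  have "qbF q (Suc n) z = (1 - z) * qbF q n (q * z) / (1 - q ^ Suc n)"
    using qbF_step[OF q, of n z] nz2 by (simp add: field_simps)
  also have "\<dots> = (1 - z) * qpoch (z * q) q n / (qpoch q q n * (1 - q * q ^ n))"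
    using Suc.IH[of "q * z"] by (simp add: mult.commute)
  also have "\<dots> = qpoch z q (Suc n) / qpoch q q (Suc n)"
    by (simp only: qpoch_Suc'[of z q n] qpoch_Suc[of q q n])
  finally show ?case .
qed

lemma has_sum_times_abs:
  fixes f :: "'a \<Rightarrow> 'c::{real_normed_field, banach}" and g :: "'b \<Rightarrow> 'c"
  assumes fS: "(f has_sum S) A" and gT: "(g has_sum T) B"
    and fa: "(\<lambda>x. norm (f x)) summable_on A" and ga: "(\<lambda>y. norm (g y)) summable_on B"
  shows "((\<lambda>(x,y). f x * g y) has_sum (S * T)) (A \<times> B)"
    and "(\<lambda>z. norm ((\<lambda>(x,y). f x * g y) z)) summable_on (A \<times> B)"
proof -
  define c where "c = infsum (\<lambda>y. norm (g y)) B"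
  have c0: "0 \<le> c" unfolding c_def by (rule infsum_nonneg) simp
  have inner: "(\<lambda>y. norm ((\<lambda>(x,y). f x * g y) (x, y))) summable_on B" for x
    using summable_on_cmult_right[OF ga, of "norm (f x)"] by (simp add: norm_mult)
  have innersum: "infsum (\<lambda>y. norm ((\<lambda>(x,y). f x * g y) (x, y))) B = norm (f x) * c" for x
    by (simp add: norm_mult c_def infsum_cmult_right')
  have outer: "(\<lambda>x. norm (infsum (\<lambda>y. norm ((\<lambda>(x,y). f x * g y) (x, y))) B)) summable_on A"
    unfolding innersum using summable_on_cmult_left[OF fa, of c] c0 by (simp add: abs_mult)
  show abs: "(\<lambda>z. norm ((\<lambda>(x,y). f x * g y) z)) summable_on (A \<times> B)"
    by (rule Infinite_Sum.abs_summable_on_Sigma_iff[THEN iffD2]) (use inner outer in auto)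
  show "((\<lambda>(x,y). f x * g y) has_sum (S * T)) (A \<times> B)"
  proof (rule has_sum_SigmaI)
    show "((\<lambda>y. (\<lambda>(x,y). f x * g y) (x, y)) has_sum (f x * T)) B" if "x \<in> A" for x
      using has_sum_cmult_right[OF gT, of "f x"] by simp
    show "((\<lambda>x. f x * T) has_sum S * T) A" by (rule has_sum_cmult_left[OF fS])
    show "(\<lambda>(x,y). f x * g y) summable_on (A \<times> B)" by (rule abs_summable_summable[OF abs])
  qed
qed

lemma summable_on_int_split:
  fixes g :: "int \<Rightarrow> 'c::banach"
  assumes "(\<lambda>n::nat. g (int n)) summable_on UNIV"
    and "(\<lambda>n::nat. g (- int (Suc n))) summable_on UNIV"
  shows "g summable_on UNIV"
proof -
  have u: "UNIV = range int \<union> range (\<lambda>n::nat. - int (Suc n))"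
  proof -
    have "x \<in> range int \<union> range (\<lambda>n::nat. - int (Suc n))" for x :: int
    proof (cases "x \<ge> 0")
      case True then show ?thesis by (metis UnI1 nonneg_int_cases rangeI)
    next
      case False
      then have "x = - int (Suc (nat (- x - 1)))" by simp
      then show ?thesis by blast
    qed
    then show ?thesis by blast
  qed
  have s1: "g summable_on range int"
    using summable_on_reindex[of int UNIV g] assms(1) by (simp add: o_def)
  have s2: "g summable_on range (\<lambda>n::nat. - int (Suc n))"
    using summable_on_reindex[of "\<lambda>n::nat. - int (Suc n)" UNIV g] assms(2)
    by (simp add: o_def inj_on_def)
  have "g summable_on (range int \<union> range (\<lambda>n::nat. - int (Suc n)))"
    by (rule summable_on_Un_disjoint[OF s1 s2]) auto
  then show ?thesis using u by simp
qed

lemma summable_sq: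
  fixes r A :: real assumes "0 \<le> r" "r < 1" "0 \<le> A"
  shows "summable (\<lambda>n. A ^ n * r ^ (n^2))"
proof -
  have "(\<lambda>k. A * r ^ k) \<longlonglongrightarrow> A * 0"
    by (intro tendsto_mult tendsto_const LIMSEQ_realpow_zero) (use assms in auto)
  then have "eventually (\<lambda>k. A * r ^ k < 1/2) sequentially"
    by (intro order_tendstoD(2)) auto
  then obtain N where N: "\<And>k. k \<ge> N \<Longrightarrow> A * r ^ k < 1/2"
    by (auto simp: eventually_sequentially)
  show ?thesis
  proof (rule summable_ratio_test[of "1/2" N])
    fix n assume n: "n \<ge> N"
    have e: "A ^ Suc n * r ^ ((Suc n)^2) = (A ^ n * r ^ (n^2)) * (A * r ^ n) * r ^ Suc n"
      by (simp add: power2_eq_square power_add algebra_simps)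
    have nn: "0 \<le> A ^ n * r ^ (n^2)" using assms by simp
    have "norm (A ^ Suc n * r ^ ((Suc n)^2)) = (A ^ n * r ^ (n^2)) * (A * r ^ n) * r ^ Suc n"
      using e assms by simp
    also have "\<dots> \<le> (A ^ n * r ^ (n^2)) * (A * r ^ n) * 1"
      by (rule mult_left_mono) (use assms nn power_le_one[of r "Suc n"] in auto)
    also have "\<dots> \<le> (A ^ n * r ^ (n^2)) * (1/2)"
      using mult_left_mono[of "A * r^n" "1/2" "A ^ n * r ^ (n^2)"] N[OF n] nn by simp
    also have "\<dots> = 1/2 * norm (A ^ n * r ^ (n^2))" using nn by simp
    finally show "norm (A ^ Suc n * r ^ ((Suc n)^2)) \<le> 1/2 * norm (A ^ n * r ^ (n^2))" .
  qed simp
qed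

lemma summable_theta_real:
  fixes r A :: real assumes "0 \<le> r" "r < 1" "0 < A"
  shows "(\<lambda>m::int. A powi m * r powi (m^2)) summable_on UNIV"
proof (rule summable_on_int_split)
  show "(\<lambda>n::nat. A powi (int n) * r powi ((int n)^2)) summable_on UNIV"
  proof -
    have "summable (\<lambda>n. A ^ n * r ^ (n^2))" by (rule summable_sq) (use assms in auto)
    moreover have "A powi (int n) * r powi ((int n)^2) = A ^ n * r ^ (n^2)" for n
      by (metis of_nat_power power_int_of_nat)
    ultimately show ?thesis
      using summable_on_UNIV_nonneg_real_iff[of "\<lambda>n. A ^ n * r ^ (n^2)"] assms by simp
  qed
  show "(\<lambda>n::nat. A powi (- int (Suc n)) * r powi ((- int (Suc n))^2)) summable_on UNIV"
  proof -
    have "summable (\<lambda>n. (1/A) ^ n * r ^ (n^2))" by (rule summable_sq) (use assms in auto)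
    then have "summable (\<lambda>n. (1/A) ^ Suc n * r ^ ((Suc n)^2))" by (rule summable_Suc_iff[THEN iffD2])
    moreover have "A powi (- int (Suc n)) * r powi ((- int (Suc n))^2) = (1/A) ^ Suc n * r ^ ((Suc n)^2)" for n
    proof -
      have "A powi (- int (Suc n)) = (1/A) ^ Suc n"
        by (simp only: power_int_minus power_int_of_nat power_one_over inverse_eq_divide)
      moreover have "r powi ((- int (Suc n))^2) = r ^ ((Suc n)^2)"
        by (metis power2_minus of_nat_power power_int_of_nat)
      ultimately show ?thesis by simp
    qed
    ultimately show ?thesis
      using summable_on_UNIV_nonneg_real_iff[of "\<lambda>n. (1/A) ^ Suc n * r ^ ((Suc n)^2)"] assms by simp
  qed
qed

definition Gf :: "complex \<Rightarrow> complex \<Rightarrow> complex" where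
  "Gf p w = (\<Sum>n. w ^ n / qpoch p p n)"

lemma Gf_summable:
  assumes "norm p < 1" "norm w < 1"
  shows "summable (\<lambda>n. norm (w ^ n / qpoch p p n))"
proof (rule summable_comparison_test')
  show "summable (\<lambda>n. qK p * norm w ^ n)"
    by (intro summable_mult summable_geometric) (use assms in auto)
  fix n :: nat
  have pos: "0 < norm (qpoch p p n)" using qpp_nonzero[OF assms(1)] by simp
  have "norm (norm (w ^ n / qpoch p p n)) = norm w ^ n / norm (qpoch p p n)"
    by (simp add: norm_divide norm_power)
  also have "\<dots> \<le> norm w ^ n / (1 / qK p)"
    by (rule divide_left_mono) (use qpp_lower[OF assms(1)] pos qK_pos in auto)
  finally show "norm (norm (w ^ n / qpoch p p n)) \<le> qK p * norm w ^ n" by (simp add: mult.commute)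
qed

lemma Gf_Ef:
  assumes p: "norm p < 1" and w: "norm w < 1"
  shows "Ef p w * Gf p w = 1"
proof -
  have cs: "(\<lambda>k. \<Sum>i\<le>k. (ep p i * w ^ i) * (w ^ (k - i) / qpoch p p (k - i))) sums
      ((\<Sum>k. ep p k * w ^ k) * (\<Sum>k. w ^ k / qpoch p p k))"
    by (rule Cauchy_product_sums[OF Ef_summable[OF p] Gf_summable[OF p w]])
  have "(\<Sum>i\<le>k. (ep p i * w ^ i) * (w ^ (k - i) / qpoch p p (k - i))) = (if k = 0 then 1 else 0)" for k
  proof -
    have "(\<Sum>i\<le>k. (ep p i * w ^ i) * (w ^ (k - i) / qpoch p p (k - i)))
        = w ^ k * qbF p k 1"
      unfolding qbF_def sum_distrib_left
      by (rule sum.cong) (auto simp: power_add[symmetric])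
    also have "\<dots> = w ^ k * (qpoch 1 p k / qpoch p p k)" by (simp add: qbin[OF p])
    also have "\<dots> = (if k = 0 then 1 else 0)"
    proof (cases k)
      case (Suc m) then show ?thesis by (simp add: qpoch_Suc')
    qed simp
    finally show ?thesis .
  qed
  then have "(\<lambda>k. if k = 0 then (1::complex) else 0) sums (Ef p w * Gf p w)"
    using cs unfolding Ef_def Gf_def by simp
  moreover have "(\<lambda>k. if k = 0 then (1::complex) else 0) sums 1"
    using sums_single[of 0 "\<lambda>_. (1::complex)"] by simp
  ultimately show ?thesis using sums_unique2 by blast
qed

lemma tri2: "2 * tri n + n = n^2"
  by (induction n) (simp_all add: tri_Suc power2_eq_square)

lemma pw_add: "(q::complex) \<noteq> 0 \<Longrightarrow> q powi a * q powi b = q powi (a + b)"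
  by (simp add: power_int_add)

lemma Ef_pow_nonpos:
  assumes p: "norm p < 1" and p0: "p \<noteq> 0" and m: "m \<le> 0"
  shows "Ef p (p powi m) = 0"
proof -
  define n where "n = Suc (nat (- m))"
  have "qpoch (p powi m) p n = 0"
    unfolding qpoch_def
  proof (rule prod_zero)
    show "\<exists>k\<in>{..<n}. 1 - p powi m * p ^ k = 0"
    proof (intro bexI)
      have "p powi m * p ^ nat (- m) = p powi m * p powi (- m)"
        using m by (simp add: power_int_nonneg_exp)
      also have "\<dots> = 1" using p0 by (simp add: power_int_minus)
      finally show "1 - p powi m * p ^ nat (- m) = 0" by simp
    qed (simp add: n_def)
  qed simp
  then show ?thesis using Ef_split[OF p, of "p powi m" n] by simp
qed

lemma Ef_pow_pos:
  assumes p: "norm p < 1"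
  shows "Ef p (p * p ^ n) = Ef p p / qpoch p p n"
  using Ef_split[OF p, of p n] qpp_nonzero[OF p, of n] by (simp add: field_simps)

definition theta :: "complex \<Rightarrow> complex \<Rightarrow> complex" where
  "theta q z = infsum (\<lambda>m::int. z powi m * q powi (m^2)) UNIV"

lemma theta_abs:
  fixes q z :: complex
  assumes q: "norm q < 1" and z: "z \<noteq> 0"
  shows "(\<lambda>m::int. norm (z powi m * q powi (m^2))) summable_on UNIV"
proof -
  have "(\<lambda>m::int. norm z powi m * norm q powi (m^2)) summable_on UNIV"
    by (rule summable_theta_real) (use q z in auto)
  moreover have "(\<lambda>m::int. norm (z powi m * q powi (m^2))) = (\<lambda>m::int. norm z powi m * norm q powi (m^2))"
    by (simp add: norm_mult norm_power_int)
  ultimately show ?thesis by simp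
qed

lemma theta_has_sum:
  assumes q: "norm q < 1" and z: "z \<noteq> 0"
  shows "((\<lambda>m::int. z powi m * q powi (m^2)) has_sum theta q z) UNIV"
  unfolding theta_def
  by (rule has_sum_infsum, rule abs_summable_summable, rule theta_abs[OF q z])

lemma theta_func:
  assumes q: "norm q < 1" and q0: "q \<noteq> 0" and z: "z \<noteq> 0"
  shows "theta q z = z * q * theta q (z * q^2)"
proof -
  define f where "f m = z powi m * q powi (m^2)" for m :: int
  have fS: "(f has_sum theta q z) UNIV" unfolding f_def by (rule theta_has_sum[OF q z])
  have "((\<lambda>m. f (m + 1)) has_sum theta q z) UNIV \<longleftrightarrow> (f has_sum theta q z) UNIV"
    by (rule has_sum_reindex_bij_witness[where i = "\<lambda>m. m - 1" and j = "\<lambda>m. m + 1"]) auto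
  with fS have A: "((\<lambda>m. f (m + 1)) has_sum theta q z) UNIV" by simp
  have zq: "z * q^2 \<noteq> 0" using z q0 by simp
  have B: "((\<lambda>m. z * q * ((z * q^2) powi m * q powi (m^2))) has_sum (z * q * theta q (z * q^2))) UNIV"
    by (rule has_sum_cmult_right[OF theta_has_sum[OF q zq]])
  have "f (m + 1) = z * q * ((z * q^2) powi m * q powi (m^2))" for m
  proof -
    have sq: "(m + 1)^2 = m^2 + 2 * m + 1" by (simp add: power2_eq_square algebra_simps)
    have e1: "z powi (m + 1) = z * z powi m" using z by (rule power_int_add_1'[OF disjI1])
    have e2a: "q powi (m^2 + 2 * m + 1) = q powi (m^2 + 2 * m) * q" using q0 by (rule power_int_add_1[OF disjI1])
    have e2b: "q powi (m^2 + 2 * m) = q powi (m^2) * q powi (2 * m)" using q0 by (rule power_int_add[OF disjI1])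
    have e3: "(q^2) powi m = q powi (2 * m)" by (subst power_int_power) simp
    have "f (m + 1) = z powi (m + 1) * q powi (m^2 + 2 * m + 1)" by (simp only: f_def sq)
    also have "\<dots> = z * z powi m * (q powi (m^2) * q powi (2 * m) * q)" by (simp only: e1 e2a e2b)
    also have "\<dots> = z * q * ((z * q^2) powi m * q powi (m^2))" by (simp only: e3 power_int_mult_distrib mult_ac)
    finally show ?thesis .
  qed
  then have "((\<lambda>m. f (m + 1)) has_sum (z * q * theta q (z * q^2))) UNIV" using B by simp
  then show ?thesis using A has_sum_unique by blast
qed

lemma Ef_has_sum:
  assumes "norm p < 1"
  shows "((\<lambda>n. ep p n * a ^ n) has_sum Ef p a) UNIV"
  by (rule norm_summable_imp_has_sum[OF Ef_summable[OF assms] Ef_sums[OF assms]])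

lemma Ef_abs:
  assumes "norm p < 1"
  shows "(\<lambda>n. norm (ep p n * a ^ n)) summable_on UNIV"
  using Ef_summable[OF assms] by (simp add: summable_on_UNIV_nonneg_real_iff)

lemma Gf_has_sum:
  assumes "norm p < 1" "norm w < 1"
  shows "((\<lambda>n. w ^ n / qpoch p p n) has_sum Gf p w) UNIV"
proof -
  have "(\<lambda>n. w ^ n / qpoch p p n) sums Gf p w"
    unfolding Gf_def by (rule summable_sums, rule summable_norm_cancel, rule Gf_summable[OF assms])
  then show ?thesis by (rule norm_summable_imp_has_sum[OF Gf_summable[OF assms]])
qed

lemma Gf_abs:
  assumes "norm p < 1" "norm w < 1"
  shows "(\<lambda>n. norm (w ^ n / qpoch p p n)) summable_on UNIV"
  using Gf_summable[OF assms] by (simp add: summable_on_UNIV_nonneg_real_iff)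

lemma int_tri2: "2 * int (tri n) = (int n)^2 - int n"
proof -
  have "int (2 * tri n + n) = int (n^2)" by (simp only: tri2)
  then show ?thesis by simp
qed

lemma q2_tri: "((q::complex)^2) ^ tri n = q powi (2 * int (tri n))"
proof -
  have "(q^2) ^ tri n = q ^ (2 * tri n)" by (simp add: power_mult)
  also have "\<dots> = q powi (int (2 * tri n))" by (simp only: power_int_of_nat)
  finally show ?thesis by simp
qed


lemma jtp_W:
  fixes q z :: complex and k :: int and n :: nat
  assumes q0: "q \<noteq> 0" and z0: "z \<noteq> 0"
  shows "z powi (k + int n) * q powi ((k + int n)^2) * ((- q / z) ^ n / qpoch (q^2) (q^2) n)
       = z powi k * q powi (k^2) * (ep (q^2) n * (q powi (2 * k + 2)) ^ n)"
proof -
  have a1: "z powi (k + int n) = z powi k * z ^ n"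
    by (simp only: power_int_add[OF disjI1[OF z0]] power_int_of_nat)
  have a2: "(- q / z) ^ n = (-1) ^ n * q ^ n / z ^ n"
  proof -
    have h: "- q / z = (-1) * (q / z)" by simp
    show ?thesis by (simp only: h power_mult_distrib power_divide times_divide_eq_right)
  qed
  have a5: "(q powi (2 * k + 2)) ^ n = q powi ((2 * k + 2) * int n)"
    by (rule power_int_power')
  have ex: "(k + int n)^2 + int n = k^2 + 2 * int (tri n) + (2 * k + 2) * int n"
  proof -
    have "(k + int n)^2 + int n - (k^2 + 2 * int (tri n) + (2 * k + 2) * int n) = (int n)^2 - int n - 2 * int (tri n)"
      by (simp add: algebra_simps power2_eq_square)
    then show ?thesis using int_tri2[of n] by linarith
  qed
  have a3: "q powi ((k + int n)^2) * q ^ n = q powi (k^2) * q powi (2 * int (tri n)) * q powi ((2 * k + 2) * int n)"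
  proof -
    have "q powi ((k + int n)^2) * q ^ n = q powi ((k + int n)^2) * q powi (int n)" by simp
    also have "\<dots> = q powi ((k + int n)^2 + int n)" by (rule pw_add[OF q0])
    also have "\<dots> = q powi (k^2 + 2 * int (tri n) + (2 * k + 2) * int n)" by (simp only: ex)
    also have "\<dots> = q powi (k^2) * q powi (2 * int (tri n)) * q powi ((2 * k + 2) * int n)"
      by (simp only: pw_add[OF q0])
    finally show ?thesis .
  qed
  have zn: "z ^ n \<noteq> 0" using z0 by simp
  have "z powi (k + int n) * q powi ((k + int n)^2) * ((- q / z) ^ n / qpoch (q^2) (q^2) n)
      = z powi k * (-1) ^ n * (q powi ((k + int n)^2) * q ^ n) / qpoch (q^2) (q^2) n"
    by (simp only: a1 a2) (simp add: zn z0 field_simps)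
  also have "\<dots> = z powi k * (-1) ^ n * (q powi (k^2) * q powi (2 * int (tri n)) * q powi ((2 * k + 2) * int n)) / qpoch (q^2) (q^2) n"
    by (simp only: a3)
  also have "\<dots> = z powi k * q powi (k^2) * (ep (q^2) n * (q powi (2 * k + 2)) ^ n)"
    by (simp only: ep_def a5 q2_tri) (simp add: mult_ac)
  finally show ?thesis .
qed

lemma jtp_big:
  fixes q z :: complex
  assumes q: "norm q < 1" and q0: "q \<noteq> 0" and zq: "norm q < norm z"
  shows "theta q z = Ef (q^2) (q^2) * Ef (q^2) (- z * q) * Ef (q^2) (- q / z)"
proof -
  define p where "p = q^2"
  have p: "norm p < 1" using q unfolding p_def by (simp add: norm_power power_less_one_iff)
  have p0: "p \<noteq> 0" using q0 by (simp add: p_def)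
  have z0: "z \<noteq> 0" using zq by auto
  define w where "w = - q / z"
  have w: "norm w < 1" using zq z0 by (simp add: w_def norm_divide divide_less_eq)
  define f where "f m = z powi m * q powi (m^2)" for m :: int
  define g where "g n = w ^ n / qpoch p p n" for n :: nat
  have fS: "(f has_sum theta q z) UNIV" unfolding f_def by (rule theta_has_sum[OF q z0])
  have fa: "(\<lambda>m. norm (f m)) summable_on UNIV" unfolding f_def by (rule theta_abs[OF q z0])
  have gS: "(g has_sum Gf p w) UNIV" unfolding g_def by (rule Gf_has_sum[OF p w])
  have ga: "(\<lambda>n. norm (g n)) summable_on UNIV" unfolding g_def by (rule Gf_abs[OF p w])
  have W: "((\<lambda>(m,n). f m * g n) has_sum (theta q z * Gf p w)) (UNIV \<times> UNIV)"
    by (rule has_sum_times_abs(1)[OF fS gS fa ga])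
  define W' where "W' = (\<lambda>(k::int, n::nat). f (k + int n) * g n)"
  have W': "(W' has_sum (theta q z * Gf p w)) (UNIV \<times> UNIV)"
  proof -
    have "(W' has_sum (theta q z * Gf p w)) (UNIV \<times> UNIV) \<longleftrightarrow>
          ((\<lambda>(m,n). f m * g n) has_sum (theta q z * Gf p w)) (UNIV \<times> UNIV)"
      by (rule has_sum_reindex_bij_witness[where i = "\<lambda>(m, n). (m - int n, n)" and j = "\<lambda>(k, n). (k + int n, n)"])
         (auto simp: W'_def)
    with W show ?thesis by simp
  qed
  have inner: "((\<lambda>n. W' (k, n)) has_sum (f k * Ef p (q powi (2 * k + 2)))) UNIV" for k
  proof -
    have "W' (k, n) = f k * (ep p n * (q powi (2 * k + 2)) ^ n)" for n
      unfolding W'_def f_def g_def w_def p_def using jtp_W[OF q0 z0, of k n] by simp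
    then show ?thesis using has_sum_cmult_right[OF Ef_has_sum[OF p, of "q powi (2 * k + 2)"], of "f k"]
      by simp
  qed
  have H: "((\<lambda>k. f k * Ef p (q powi (2 * k + 2))) has_sum (theta q z * Gf p w)) UNIV"
    by (rule has_sum_Sigma'[OF W'[unfolded UNIV_Times_UNIV[symmetric]]]) (use inner in auto)
  define h where "h k = f k * Ef p (q powi (2 * k + 2))" for k
  have qp: "q powi (2 * k + 2) = p powi (k + 1)" for k
  proof -
    have "p powi (k + 1) = q powi (int 2 * (k + 1))" unfolding p_def by (rule power_int_power)
    then show ?thesis by (simp add: algebra_simps)
  qed
  have hneg: "h k = 0" if "k \<notin> range int" for k
  proof -
    have "k < 0" using that by (metis nonneg_int_cases not_less rangeI)
    then have "Ef p (p powi (k + 1)) = 0" by (intro Ef_pow_nonpos[OF p p0]) simp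
    then show ?thesis by (simp add: h_def qp)
  qed
  have hpos: "h (int n) = ep p n * (- z * q) ^ n * Ef p p" for n
  proof -
    have "p powi (int n + 1) = p * p ^ n" by (simp add: power_int_add_1' p0)
    then have "Ef p (q powi (2 * int n + 2)) = Ef p p / qpoch p p n"
      by (simp add: qp Ef_pow_pos[OF p])
    moreover have "f (int n) = z ^ n * q ^ (n^2)" unfolding f_def
      by (metis of_nat_power power_int_of_nat)
    moreover have "ep p n * (- z * q) ^ n = z ^ n * q ^ (n^2) / qpoch p p n"
    proof -
      have "(- z * q) ^ n = (-1) ^ n * z ^ n * q ^ n"
        by (metis mult_minus1 power_mult_distrib)
      moreover have "p ^ tri n * q ^ n = q ^ (n^2)"
        unfolding p_def by (simp add: power_mult[symmetric] power_add[symmetric] tri2)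
      ultimately show ?thesis by (simp add: ep_def field_simps)
    qed
    ultimately show ?thesis by (simp add: h_def)
  qed
  have H2: "(h has_sum (Ef p (- z * q) * Ef p p)) UNIV"
  proof -
    have "((\<lambda>n. ep p n * (- z * q) ^ n * Ef p p) has_sum (Ef p (- z * q) * Ef p p)) UNIV"
      by (rule has_sum_cmult_left[OF Ef_has_sum[OF p]])
    then have "((h \<circ> int) has_sum (Ef p (- z * q) * Ef p p)) UNIV"
      by (simp add: o_def hpos)
    then have "(h has_sum (Ef p (- z * q) * Ef p p)) (range int)"
      by (subst has_sum_reindex) auto
    then show ?thesis
      by (rule has_sum_cong_neutral[THEN iffD1, rotated -1]) (use hneg in auto)
  qed
  have eq: "theta q z * Gf p w = Ef p (- z * q) * Ef p p"
    using H H2 unfolding h_def using has_sum_unique by blast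
  have "theta q z = theta q z * (Ef p w * Gf p w)" using Gf_Ef[OF p w] by simp
  also have "\<dots> = Ef p p * Ef p (- z * q) * Ef p w" using eq by (simp add: mult_ac)
  finally show ?thesis by (simp add: p_def w_def)
qed

lemma R_func:
  fixes q w :: complex
  assumes q: "norm q < 1" and q0: "q \<noteq> 0" and w0: "w \<noteq> 0"
  shows "Ef (q^2) (q^2) * Ef (q^2) (- w * q) * Ef (q^2) (- q / w)
       = w * q * (Ef (q^2) (q^2) * Ef (q^2) (- (w * q^2) * q) * Ef (q^2) (- q / (w * q^2)))"
proof -
  define p where "p = q^2"
  have p: "norm p < 1" using q unfolding p_def by (simp add: norm_power power_less_one_iff)
  have e1: "Ef p (- w * q) = (1 + w * q) * Ef p (- (w * q^2) * q)"
  proof -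
    have h: "- w * q * p = - (w * q^2) * q" by (simp add: p_def power2_eq_square)
    show ?thesis using Ef_func[OF p, of "- w * q"] unfolding h by simp
  qed
  have e2: "Ef p (- q / (w * q^2)) = (1 + 1 / (w * q)) * Ef p (- q / w)"
  proof -
    have h1: "- q / (w * q^2) * p = - q / w" using q0 by (simp add: p_def power2_eq_square field_simps)
    have h2: "1 - (- q / (w * q^2)) = 1 + 1 / (w * q)" using q0 by (simp add: power2_eq_square field_simps)
    have "Ef p (- q / (w * q^2)) = (1 - - q / (w * q^2)) * Ef p (- q / (w * q^2) * p)" by (rule Ef_func[OF p])
    then show ?thesis by (simp only: h1 h2)
  qed
  have f: "w * q * (1 + 1 / (w * q)) = 1 + w * q" using q0 w0 by (simp add: field_simps)
  define E0 E1 E2 where "E0 = Ef p p" and "E1 = Ef p (- (w * q^2) * q)" and "E2 = Ef p (- q / w)"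
  have "E0 * ((1 + w * q) * E1) * E2 = w * q * (E0 * E1 * ((1 + 1 / (w * q)) * E2))"
  proof -
    have "w * q * (E0 * E1 * ((1 + 1 / (w * q)) * E2)) = E0 * E1 * E2 * (w * q * (1 + 1 / (w * q)))"
      by (simp only: mult_ac)
    also have "\<dots> = E0 * ((1 + w * q) * E1) * E2" unfolding f by (simp only: mult_ac)
    finally show ?thesis by (rule sym)
  qed
  then have X: "Ef (q^2) (q^2) * ((1 + w * q) * Ef (q^2) (- (w * q^2) * q)) * Ef (q^2) (- q / w)
      = w * q * (Ef (q^2) (q^2) * Ef (q^2) (- (w * q^2) * q) * ((1 + 1 / (w * q)) * Ef (q^2) (- q / w)))"
    unfolding E0_def E1_def E2_def p_def .
  have e1': "Ef (q^2) (- w * q) = (1 + w * q) * Ef (q^2) (- (w * q^2) * q)" using e1 unfolding p_def .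
  have e2': "Ef (q^2) (- q / (w * q^2)) = (1 + 1 / (w * q)) * Ef (q^2) (- q / w)" using e2 unfolding p_def .
  show ?thesis unfolding e1' e2' by (rule X)
qed

lemma jtp:
  fixes q z :: complex
  assumes q: "norm q < 1" and q0: "q \<noteq> 0" and z0: "z \<noteq> 0"
  shows "theta q z = Ef (q^2) (q^2) * Ef (q^2) (- z * q) * Ef (q^2) (- q / z)"
proof -
  define R where "R z = Ef (q^2) (q^2) * Ef (q^2) (- z * q) * Ef (q^2) (- q / z)" for z
  have P: "\<forall>z. norm q ^ (2 * N + 1) < norm z \<longrightarrow> theta q z = R z" for N
  proof (induction N)
    case 0
    then show ?case using jtp_big[OF q q0] by (simp add: R_def)
  next
    case (Suc N)
    show ?case
    proof (intro allI impI)
      fix z :: complex assume zN: "norm q ^ (2 * Suc N + 1) < norm z"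
      have z0': "z \<noteq> 0" using zN by (metis norm_zero norm_ge_zero zero_le_power not_less)
      define w where "w = z / q^2"
      have w0: "w \<noteq> 0" using z0' q0 by (simp add: w_def)
      have wz: "w * q^2 = z" using q0 by (simp add: w_def)
      have "norm q ^ (2 * N + 1) < norm w"
      proof -
        have eq: "norm q ^ (2 * Suc N + 1) = norm q ^ (2 * N + 1) * norm q ^ 2" by (simp only: power_add[symmetric]) simp
        have a: "norm q ^ (2 * N + 1) * norm q ^ 2 < norm z" using zN unfolding eq .
        have b: "norm z = norm w * norm q ^ 2" using wz by (metis norm_mult norm_power)
        have "norm q ^ (2 * N + 1) * norm q ^ 2 < norm w * norm q ^ 2" using a b by simp
        then show ?thesis by (rule mult_right_less_imp_less) simp
      qed
      then have tw: "theta q w = R w" using Suc.IH by blast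
      have A: "theta q w = w * q * theta q z" using theta_func[OF q q0 w0] wz by simp
      have B: "R w = w * q * R z" using R_func[OF q q0 w0] wz by (simp add: R_def)
      have "w * q * theta q z = w * q * R z" by (metis A B tw)
      then show "theta q z = R z" using w0 q0 by simp
    qed
  qed
  have "(\<lambda>n. norm q ^ n) \<longlonglongrightarrow> 0" by (rule LIMSEQ_realpow_zero) (use q in auto)
  then have "eventually (\<lambda>n. norm q ^ n < norm z) sequentially"
    by (rule order_tendstoD(2)) (use z0 in simp)
  then obtain N where N: "norm q ^ N < norm z" by (auto simp: eventually_sequentially)
  have "norm q ^ (2 * N + 1) \<le> norm q ^ N"
    by (rule power_decreasing) (use q in auto)
  then have "norm q ^ (2 * N + 1) < norm z" using N by simp
  then show ?thesis using P by (simp add: R_def)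
qed

lemma pwg: "(t::'a::division_ring) \<noteq> 0 \<Longrightarrow> t powi a * t powi b = t powi (a + b)"
  by (simp add: power_int_add)

lemma Ef_nonzero:
  assumes p: "norm p < 1" and nz: "\<And>n. qpoch a p n \<noteq> 0"
  shows "Ef p a \<noteq> 0"
proof -
  have "eventually (\<lambda>n. Ef p (a * p ^ n) \<noteq> 0) sequentially"
    using Ef_lim[OF p, of a] by (rule tendsto_imp_eventually_ne) simp
  then obtain n where "Ef p (a * p ^ n) \<noteq> 0" by (auto simp: eventually_sequentially)
  then show ?thesis using Ef_split[OF p, of a n] nz[of n] by simp
qed

lemma qpoch_xq_nonzero:
  fixes q x :: complex
  assumes x: "\<And>k::nat. k \<ge> 1 \<Longrightarrow> x * q ^ k \<noteq> 1"
  shows "qpoch (x * q) q n \<noteq> 0"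
proof -
  have "1 - x * q * q ^ m \<noteq> 0" for m
    using x[of "Suc m"] by (simp add: mult.assoc)
  then show ?thesis unfolding qpoch_def by (simp add: prod_zero_iff)
qed

lemma Ef_shift_int:
  fixes q x :: complex and i :: int
  assumes q: "norm q < 1" and q0: "q \<noteq> 0"
    and x: "\<And>k::nat. k \<ge> 1 \<Longrightarrow> x * q ^ k \<noteq> 1"
  shows "Ef q (x * q powi (i + 1)) = Ef q (x * q) / qpoch_int (x * q) q i"
proof (cases "0 \<le> i")
  case True
  define n where "n = nat i"
  have i: "i = int n" using True by (simp add: n_def)
  have e: "x * q * q ^ n = x * q powi (i + 1)"
    by (simp add: i power_int_add_1 q0 mult_ac)
  have s: "Ef q (x * q) = qpoch (x * q) q n * Ef q (x * q powi (i + 1))"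
    using Ef_split[OF q, of "x * q" n] unfolding e .
  have qi: "qpoch_int (x * q) q i = qpoch (x * q) q n"
    using True by (simp add: qpoch_int_def n_def)
  show ?thesis unfolding qi s using qpoch_xq_nonzero[OF x, of n] by simp
next
  case False
  define n where "n = nat (- i)"
  have i: "i = - int n" using False by (simp add: n_def)
  define b where "b = x * q * q powi i"
  have bx: "b = x * q powi (i + 1)"
    by (simp add: b_def power_int_add_1' q0 mult_ac)
  have bn: "b * q ^ n = x * q"
  proof -
    have "q powi i * q ^ n = 1" using q0 by (simp add: i power_int_minus)
    then show ?thesis by (simp add: b_def mult.assoc)
  qed
  have "Ef q b = qpoch b q n * Ef q (b * q ^ n)" by (rule Ef_split[OF q])
  then have "Ef q b = qpoch b q n * Ef q (x * q)" by (simp add: bn)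
  moreover have "qpoch_int (x * q) q i = 1 / qpoch b q n"
    using False by (simp add: qpoch_int_def b_def n_def)
  ultimately show ?thesis by (simp add: bx)
qed

definition VV :: "complex \<Rightarrow> complex \<Rightarrow> complex \<Rightarrow> int \<Rightarrow> int \<Rightarrow> nat \<Rightarrow> nat \<Rightarrow> complex" where
  "VV q x y a b k l = x powi a * y powi b * q powi (a^2 - a*b + b^2) * ep q k * ep q l
      * q powi (int k * (b - a + 1) + int l * (a - b + 1) - int k * int l)"

lemma VV_shift:
  fixes q x y :: complex
  assumes q0: "q \<noteq> 0" and x0: "x \<noteq> 0" and y0: "y \<noteq> 0"
  shows "VV q x y (i + int k) (j + int l) k l
    = (x powi i * y powi j * q powi (i^2 - i*j + j^2)) *
      ((ep q k * (x * q powi (i + 1)) ^ k) * (ep q l * (y * q powi (j + 1)) ^ l))"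
proof -
  define QA where "QA = (i + int k)^2 - (i + int k) * (j + int l) + (j + int l)^2"
  define LA where "LA = int k * ((j + int l) - (i + int k) + 1) + int l * ((i + int k) - (j + int l) + 1) - int k * int l"
  have a1x: "x powi (i + int k) = x powi i * x ^ k"
    by (simp only: power_int_add[OF disjI1[OF x0]] power_int_of_nat)
  have a1y: "y powi (j + int l) = y powi j * y ^ l"
    by (simp only: power_int_add[OF disjI1[OF y0]] power_int_of_nat)
  have a2x: "(x * q powi (i + 1)) ^ k = x ^ k * q powi ((i + 1) * int k)"
    by (simp only: power_mult_distrib power_int_power')
  have a2y: "(y * q powi (j + 1)) ^ l = y ^ l * q powi ((j + 1) * int l)"
    by (simp only: power_mult_distrib power_int_power')
  have ex: "QA + LA = (i^2 - i*j + j^2) + (i + 1) * int k + (j + 1) * int l"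
    unfolding QA_def LA_def by (simp add: algebra_simps power2_eq_square)
  have qe: "q powi QA * q powi LA = q powi (i^2 - i*j + j^2) * q powi ((i + 1) * int k) * q powi ((j + 1) * int l)"
    by (simp only: pwg[OF q0] ex)
  define A where "A = x powi i * x ^ k * y powi j * y ^ l * ep q k * ep q l"
  have "VV q x y (i + int k) (j + int l) k l = A * (q powi QA * q powi LA)"
    unfolding VV_def QA_def[symmetric] LA_def[symmetric] A_def a1x a1y by (simp only: mult_ac)
  also have "\<dots> = A * (q powi (i^2 - i*j + j^2) * q powi ((i + 1) * int k) * q powi ((j + 1) * int l))"
    by (simp only: qe)
  also have "\<dots> = (x powi i * y powi j * q powi (i^2 - i*j + j^2)) *
      ((ep q k * (x * q powi (i + 1)) ^ k) * (ep q l * (y * q powi (j + 1)) ^ l))"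
    unfolding a2x a2y A_def by (simp only: mult_ac)
  finally show ?thesis .
qed

lemma VV_split:
  fixes q x y :: complex
  assumes q0: "q \<noteq> 0"
  shows "VV q x y a b k l
    = (x powi a * y powi b * q powi (a^2 - a*b + b^2) * ep q k * q powi (int k * (b - a + 1)))
      * (ep q l * (q powi (1 - (b - a) - int k)) ^ l)"
proof -
  have ex: "int k * (b - a + 1) + int l * (a - b + 1) - int k * int l
      = int k * (b - a + 1) + (1 - (b - a) - int k) * int l"
    by (simp add: algebra_simps)
  have "q powi (int k * (b - a + 1) + int l * (a - b + 1) - int k * int l)
      = q powi (int k * (b - a + 1)) * (q powi (1 - (b - a) - int k)) ^ l"
    by (simp only: ex power_int_power' pwg[OF q0])
  then show ?thesis unfolding VV_def by (simp only: mult_ac)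
qed

lemma VV_exp:
  fixes a b :: int and k l :: nat
  shows "2 * ((a^2 - a*b + b^2) + (int k * (b - a + 1) + int l * (a - b + 1) - int k * int l) + int (tri k) + int (tri l))
       = a^2 + b^2 + int k + int l + (b - a + int k - int l)^2"
proof -
  have "2 * ((a^2 - a*b + b^2) + (int k * (b - a + 1) + int l * (a - b + 1) - int k * int l) + int (tri k) + int (tri l))
       - (a^2 + b^2 + int k + int l + (b - a + int k - int l)^2)
       = (2 * int (tri k) - ((int k)^2 - int k)) + (2 * int (tri l) - ((int l)^2 - int l))"
    by (simp add: algebra_simps power2_eq_square)
  then show ?thesis using int_tri2[of k] int_tri2[of l] by linarith
qed

lemma VV_bound:
  fixes q x y :: complex
  assumes q: "norm q < 1" and q0: "q \<noteq> 0"
  shows "norm (VV q x y a b k l) \<le> (qK q)^2 *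
     ((norm x powi a * sqrt (norm q) powi (a^2)) * (norm y powi b * sqrt (norm q) powi (b^2))) *
     (sqrt (norm q) ^ k * sqrt (norm q) ^ l)"
proof -
  define t where "t = norm q"
  define r where "r = sqrt t"
  have t0: "0 < t" using q0 by (simp add: t_def)
  have r0: "0 < r" using t0 by (simp add: r_def)
  have r1: "r \<le> 1" using q by (simp add: r_def t_def)
  have rt: "r^2 = t" using t0 by (simp add: r_def)
  define Q where "Q = a^2 - a*b + b^2"
  define L where "L = int k * (b - a + 1) + int l * (a - b + 1) - int k * int l"
  define E where "E = Q + L + int (tri k) + int (tri l)"
  define P where "P = norm x powi a * norm y powi b * t powi Q * t powi L"
  have P0: "0 \<le> P" using t0 by (simp add: P_def)
  have "norm (VV q x y a b k l) = P * (norm (ep q k) * norm (ep q l))"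
    unfolding VV_def P_def Q_def[symmetric] L_def[symmetric] t_def
    by (simp add: norm_mult norm_power_int mult_ac)
  also have "\<dots> \<le> P * ((qK q * t ^ tri k) * (qK q * t ^ tri l))"
    by (intro mult_left_mono mult_mono P0) (auto simp: t_def ep_bound[OF q] intro!: mult_nonneg_nonneg less_imp_le[OF qK_pos])
  also have "\<dots> = (qK q)^2 * (norm x powi a * norm y powi b) * (t powi Q * t powi L * t powi (int (tri k)) * t powi (int (tri l)))"
    unfolding P_def by (simp add: power2_eq_square mult_ac)
  also have "t powi Q * t powi L * t powi (int (tri k)) * t powi (int (tri l)) = t powi E"
    unfolding E_def using t0 by (simp only: pwg)
  also have "t powi E = r powi (2 * E)"
    unfolding rt[symmetric] by (simp add: power_int_power)
  also have "r powi (2 * E) \<le> r powi (a^2 + b^2 + int k + int l)"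
  proof (rule power_int_decreasing)
    show "a^2 + b^2 + int k + int l \<le> 2 * E"
      unfolding E_def Q_def L_def VV_exp by simp
  qed (use r0 r1 in auto)
  also have "r powi (a^2 + b^2 + int k + int l) = r powi (a^2) * r powi (b^2) * r ^ k * r ^ l"
  proof -
    have rn: "r \<noteq> 0" using r0 by simp
    have "r powi (a^2) * r powi (b^2) * r ^ k * r ^ l = r powi (a^2) * r powi (b^2) * r powi (int k) * r powi (int l)"
      by simp
    also have "\<dots> = r powi (a^2 + b^2 + int k + int l)" by (simp only: pwg[OF rn])
    finally show ?thesis by simp
  qed
  finally have "norm (VV q x y a b k l) \<le> (qK q)^2 * (norm x powi a * norm y powi b) * (r powi (a^2) * r powi (b^2) * r ^ k * r ^ l)"
    using qK_pos[of q] by (simp add: mult_left_mono)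
  then show ?thesis unfolding r_def t_def by (simp add: mult_ac)
qed

lemma summable_prod_real:
  fixes f :: "'a \<Rightarrow> real" and g :: "'b \<Rightarrow> real"
  assumes fs: "f summable_on A" and gs: "g summable_on B" and f0: "\<And>x. f x \<ge> 0" and g0: "\<And>y. g y \<ge> 0"
  shows "(\<lambda>(x,y). f x * g y) summable_on (A \<times> B)"
proof -
  have fa: "(\<lambda>x. norm (f x)) summable_on A" using fs f0 by simp
  have ga: "(\<lambda>y. norm (g y)) summable_on B" using gs g0 by simp
  have "(\<lambda>z. norm ((\<lambda>(x,y). f x * g y) z)) summable_on (A \<times> B)"
    by (rule has_sum_times_abs(2)[OF has_sum_infsum[OF fs] has_sum_infsum[OF gs] fa ga])
  moreover have "(\<lambda>z. norm ((\<lambda>(x,y). f x * g y) z)) = (\<lambda>(x,y). f x * g y)"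
    using f0 g0 by (auto simp: abs_mult)
  ultimately show ?thesis by simp
qed

lemma VV_abs:
  fixes q x y :: complex
  assumes q: "norm q < 1" and q0: "q \<noteq> 0" and x0: "x \<noteq> 0" and y0: "y \<noteq> 0"
  shows "(\<lambda>z. norm ((\<lambda>((a,b),(k,l)). VV q x y a b k l) z)) summable_on UNIV"
proof -
  define r where "r = sqrt (norm q)"
  have r0: "0 \<le> r" and r1: "r < 1" using q by (auto simp: r_def)
  define fa where "fa a = norm x powi a * r powi (a^2)" for a :: int
  define fb where "fb b = norm y powi b * r powi (b^2)" for b :: int
  define gk where "gk k = r ^ k" for k :: nat
  have fas: "fa summable_on UNIV" unfolding fa_def by (rule summable_theta_real) (use r0 r1 x0 in auto)
  have fbs: "fb summable_on UNIV" unfolding fb_def by (rule summable_theta_real) (use r0 r1 y0 in auto)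
  have gks: "gk summable_on UNIV" unfolding gk_def
    using summable_geometric[of r] r0 r1 by (simp add: summable_on_UNIV_nonneg_real_iff)
  have fa0: "fa a \<ge> 0" for a by (simp add: fa_def r0)
  have fb0: "fb b \<ge> 0" for b by (simp add: fb_def r0)
  have gk0: "gk k \<ge> 0" for k by (simp add: gk_def r0)
  have s1: "(\<lambda>(a,b). fa a * fb b) summable_on (UNIV \<times> UNIV)"
    by (rule summable_prod_real[OF fas fbs fa0 fb0])
  have s2: "(\<lambda>(k,l). gk k * gk l) summable_on (UNIV \<times> UNIV)"
    by (rule summable_prod_real[OF gks gks gk0 gk0])
  have s3: "(\<lambda>(u,v). (\<lambda>(a,b). fa a * fb b) u * (\<lambda>(k,l). gk k * gk l) v) summable_on ((UNIV \<times> UNIV) \<times> (UNIV \<times> UNIV))"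
    by (rule summable_prod_real[OF s1 s2]) (auto intro!: mult_nonneg_nonneg fa0 fb0 gk0)
  define B where "B = (\<lambda>z. (qK q)^2 * (\<lambda>(u,v). (\<lambda>(a,b). fa a * fb b) u * (\<lambda>(k,l). gk k * gk l) v) z)"
  have Bs: "B summable_on UNIV"
    unfolding B_def using summable_on_cmult_right[OF s3, of "(qK q)^2"] by simp
  have B0: "B z \<ge> 0" for z
    unfolding B_def by (auto split: prod.splits intro!: mult_nonneg_nonneg fa0 fb0 gk0)
  show ?thesis
  proof (rule Infinite_Sum.abs_summable_on_comparison_test)
    show "(\<lambda>z. norm (B z)) summable_on UNIV" using Bs B0 by simp
    fix z :: "(int \<times> int) \<times> (nat \<times> nat)" assume "z \<in> UNIV"
    obtain a b k l where z: "z = ((a, b), (k, l))" by (metis prod.collapse)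
    have "norm (VV q x y a b k l) \<le> B z"
      unfolding B_def z fa_def fb_def gk_def r_def using VV_bound[OF q q0, of x y a b k l] by simp
    then show "norm ((\<lambda>((a,b),(k,l)). VV q x y a b k l) z) \<le> norm (B z)"
      using B0[of z] by (simp add: z)
  qed
qed

lemma outer_sum:
  fixes q x y :: complex and a b :: int
  assumes q: "norm q < 1" and q0: "q \<noteq> 0"
  shows "((\<lambda>k. (x powi a * y powi b * q powi (a^2 - a*b + b^2) * ep q k * q powi (int k * (b - a + 1)))
            * Ef q (q powi (1 - (b - a) - int k)))
         has_sum (if a = b then x powi a * y powi a * q powi (a^2) * Ef q q else 0)) UNIV"
proof -
  define c0 where "c0 = x powi a * y powi b * q powi (a^2 - a*b + b^2)"
  define h where "h k = (c0 * ep q k * q powi (int k * (b - a + 1))) * Ef q (q powi (1 - (b - a) - int k))" for k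
  have hdef: "(\<lambda>k. (x powi a * y powi b * q powi (a^2 - a*b + b^2) * ep q k * q powi (int k * (b - a + 1)))
            * Ef q (q powi (1 - (b - a) - int k))) = h"
    by (rule ext) (simp add: h_def c0_def)
  have hz: "h k = 0" if "1 - (b - a) - int k \<le> 0" for k
    using Ef_pow_nonpos[OF q q0 that] by (simp add: h_def)
  show ?thesis
  proof (cases "b - a > 0")
    case True
    then have "h k = 0" for k by (intro hz) simp
    moreover have "a \<noteq> b" using True by simp
    ultimately show ?thesis unfolding hdef by (simp add: has_sum_0)
  next
    case False
    define r where "r = nat (a - b)"
    have d: "b - a = - int r" using False by (simp add: r_def)
    have hz2: "h k = 0" if "k \<notin> {..r}" for k
      by (rule hz) (use that d in auto)
    have hk: "h k = c0 * Ef q q * (ep q k * (q powi (1 - int r)) ^ k / qpoch q q (r - k))" if "k \<in> {..r}" for k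
    proof -
      have kr: "k \<le> r" using that by simp
      have "q powi (1 - (b - a) - int k) = q * q ^ (r - k)"
      proof -
        have e: "1 - (b - a) - int k = int (r - k) + 1" using kr d by simp
        have "q powi (int (r - k) + 1) = q * q powi (int (r - k))" by (rule power_int_add_1'[OF disjI1[OF q0]])
        then show ?thesis unfolding e by simp
      qed
      then have "Ef q (q powi (1 - (b - a) - int k)) = Ef q q / qpoch q q (r - k)"
        by (simp add: Ef_pow_pos[OF q])
      moreover have "q powi (int k * (b - a + 1)) = (q powi (1 - int r)) ^ k"
        by (simp add: d power_int_power' mult.commute)
      ultimately show ?thesis by (simp add: h_def mult_ac)
    qed
    have "(h has_sum (\<Sum>k\<le>r. h k)) UNIV"
      by (rule has_sum_finite_neutralI) (use hz2 in auto)
    moreover have "(\<Sum>k\<le>r. h k) = c0 * Ef q q * (qpoch (q powi (1 - int r)) q r / qpoch q q r)"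
    proof -
      have "(\<Sum>k\<le>r. h k) = c0 * Ef q q * qbF q r (q powi (1 - int r))"
        unfolding qbF_def sum_distrib_left by (rule sum.cong) (simp_all add: hk)
      then show ?thesis by (simp add: qbin[OF q])
    qed
    moreover have "c0 * Ef q q * (qpoch (q powi (1 - int r)) q r / qpoch q q r)
        = (if a = b then x powi a * y powi a * q powi (a^2) * Ef q q else 0)"
    proof (cases r)
      case 0
      then have "a = b" using d by simp
      then show ?thesis using 0 by (simp add: c0_def power2_eq_square)
    next
      case (Suc m)
      have "a \<noteq> b" using d Suc by simp
      moreover have "qpoch (q powi (1 - int r)) q r = 0"
        unfolding qpoch_def
      proof (rule prod_zero)
        have "q powi (1 - int r) * q ^ m = q powi (1 - int r) * q powi (int r - 1)"
          using Suc by simp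
        also have "\<dots> = 1" using q0 by (simp add: pwg)
        finally show "\<exists>k\<in>{..<r}. 1 - q powi (1 - int r) * q ^ k = 0"
          using Suc by (intro bexI[of _ m]) auto
      qed simp
      ultimately show ?thesis by simp
    qed
    ultimately show ?thesis unfolding hdef by simp
  qed
qed

lemma main_q0:
  fixes q x y :: complex
  assumes q: "norm q < 1" and q0: "q \<noteq> 0" and x0: "x \<noteq> 0" and y0: "y \<noteq> 0"
    and xk: "\<And>k::nat. k \<ge> 1 \<Longrightarrow> x * q ^ k \<noteq> 1"
    and yk: "\<And>k::nat. k \<ge> 1 \<Longrightarrow> y * q ^ k \<noteq> 1"
  shows "((\<lambda>(i::int, j::int). x powi i * y powi j * q powi (i^2 - i*j + j^2)
              / (qpoch_int (x * q) q i * qpoch_int (y * q) q j))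
          has_sum (Ef q q * theta q (x * y) / (Ef q (x * q) * Ef q (y * q)))) UNIV"
proof -
  define T where "T = (\<lambda>(i::int, j::int). x powi i * y powi j * q powi (i^2 - i*j + j^2)
              / (qpoch_int (x * q) q i * qpoch_int (y * q) q j))"
  define X where "X = Ef q (x * q)"
  define Y where "Y = Ef q (y * q)"
  have X0: "X \<noteq> 0" unfolding X_def by (rule Ef_nonzero[OF q qpoch_xq_nonzero[OF xk]])
  have Y0: "Y \<noteq> 0" unfolding Y_def by (rule Ef_nonzero[OF q qpoch_xq_nonzero[OF yk]])
  define VT where "VT = (\<lambda>((a::int, b::int), (k::nat, l::nat)). VV q x y a b k l)"
  have VTa: "(\<lambda>z. norm (VT z)) summable_on UNIV" unfolding VT_def by (rule VV_abs[OF q q0 x0 y0])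
  have VTs: "VT summable_on UNIV" by (rule abs_summable_summable[OF VTa])
  define S where "S = infsum VT UNIV"
  have VTS: "(VT has_sum S) (UNIV \<times> UNIV)" unfolding S_def using has_sum_infsum[OF VTs] by simp
  define VS where "VS = (\<lambda>((i::int, j::int), (k::nat, l::nat)). VT ((i + int k, j + int l), (k, l)))"
  have VSS: "(VS has_sum S) (UNIV \<times> UNIV)"
  proof -
    have "(VS has_sum S) UNIV \<longleftrightarrow> (VT has_sum S) UNIV"
      by (rule has_sum_reindex_bij_witness[where i = "\<lambda>((a, b), (k, l)). ((a - int k, b - int l), (k, l))"
            and j = "\<lambda>((i, j), (k, l)). ((i + int k, j + int l), (k, l))"])
         (auto simp: VS_def)
    then show ?thesis using VTS by simp
  qed
  have inner1: "((\<lambda>kl. VS (ij, kl)) has_sum (T ij * (X * Y))) UNIV" for ij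
  proof -
    obtain i j where ij: "ij = (i, j)" by (metis prod.collapse)
    define c where "c = x powi i * y powi j * q powi (i^2 - i*j + j^2)"
    define f where "f k = ep q k * (x * q powi (i + 1)) ^ k" for k
    define g where "g l = ep q l * (y * q powi (j + 1)) ^ l" for l
    have P: "((\<lambda>(k,l). f k * g l) has_sum (Ef q (x * q powi (i + 1)) * Ef q (y * q powi (j + 1)))) (UNIV \<times> UNIV)"
      unfolding f_def g_def by (rule has_sum_times_abs(1)[OF Ef_has_sum[OF q] Ef_has_sum[OF q] Ef_abs[OF q] Ef_abs[OF q]])
    have "((\<lambda>kl. c * (\<lambda>(k,l). f k * g l) kl) has_sum (c * (Ef q (x * q powi (i + 1)) * Ef q (y * q powi (j + 1))))) UNIV"
      using has_sum_cmult_right[OF P, of c] by simp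
    moreover have "(\<lambda>kl. c * (\<lambda>(k,l). f k * g l) kl) = (\<lambda>kl. VS (ij, kl))"
    proof (rule ext)
      fix kl :: "nat \<times> nat"
      obtain k l where kl: "kl = (k, l)" by (metis prod.collapse)
      show "c * (\<lambda>(k,l). f k * g l) kl = VS (ij, kl)"
        unfolding kl ij VS_def VT_def using VV_shift[OF q0 x0 y0, of i k j l]
        by (simp add: c_def f_def g_def)
    qed
    moreover have "c * (Ef q (x * q powi (i + 1)) * Ef q (y * q powi (j + 1))) = T ij * (X * Y)"
    proof -
      have ex: "Ef q (x * q powi (i + 1)) = X / qpoch_int (x * q) q i" unfolding X_def by (rule Ef_shift_int[OF q q0 xk])
      have ey: "Ef q (y * q powi (j + 1)) = Y / qpoch_int (y * q) q j" unfolding Y_def by (rule Ef_shift_int[OF q q0 yk])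
      show ?thesis unfolding ex ey T_def ij c_def by (simp only: prod.case divide_inverse mult_ac inverse_mult_distrib)
    qed
    ultimately show ?thesis by simp
  qed
  have R1: "((\<lambda>ij. T ij * (X * Y)) has_sum S) UNIV"
    by (rule has_sum_Sigma'[OF VSS]) (use inner1 in auto)
  define D where "D = (\<lambda>(a::int, b::int). if a = b then x powi a * y powi a * q powi (a^2) * Ef q q else 0)"
  have inner2: "((\<lambda>kl. VT (ab, kl)) has_sum D ab) UNIV" for ab
  proof -
    obtain a b where ab: "ab = (a, b)" by (metis prod.collapse)
    define C where "C k = x powi a * y powi b * q powi (a^2 - a*b + b^2) * ep q k * q powi (int k * (b - a + 1))" for k
    have abs2: "(\<lambda>kl. norm (VT (ab, kl))) summable_on UNIV"
    proof -
      have "(\<lambda>z. norm (VT z)) summable_on (Sigma UNIV (\<lambda>_. UNIV))" using VTa by simp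
      then have "(\<forall>u\<in>UNIV. (\<lambda>v. norm (VT (u, v))) summable_on UNIV) \<and>
          ((\<lambda>u. norm (infsum (\<lambda>v. norm (VT (u, v))) UNIV)) summable_on UNIV)"
        by (rule Infinite_Sum.abs_summable_on_Sigma_iff[THEN iffD1])
      then show ?thesis by blast
    qed
    show ?thesis
    proof (rule has_sum_SigmaI[where A = UNIV and B = "\<lambda>_. UNIV", simplified])
      show "(\<lambda>kl. VT (ab, kl)) summable_on UNIV" by (rule abs_summable_summable[OF abs2])
      show "((\<lambda>l. VT (ab, (k, l))) has_sum (C k * Ef q (q powi (1 - (b - a) - int k)))) UNIV" for k
      proof -
        have "VT (ab, (k, l)) = C k * (ep q l * (q powi (1 - (b - a) - int k)) ^ l)" for l
          unfolding VT_def ab C_def using VV_split[OF q0, of x y a b k l] by simp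
        then show ?thesis using has_sum_cmult_right[OF Ef_has_sum[OF q, of "q powi (1 - (b - a) - int k)"], of "C k"]
          by simp
      qed
      show "((\<lambda>k. C k * Ef q (q powi (1 - (b - a) - int k))) has_sum D ab) UNIV"
        unfolding C_def D_def ab using outer_sum[OF q q0, where x=x and y=y and a=a and b=b] by simp
    qed
  qed
  have R2: "(D has_sum S) UNIV"
    by (rule has_sum_Sigma'[OF VTS]) (use inner2 in auto)
  have xy0: "x * y \<noteq> 0" using x0 y0 by simp
  have R3: "(D has_sum (Ef q q * theta q (x * y))) UNIV"
  proof -
    have "((\<lambda>a. Ef q q * ((x * y) powi a * q powi (a^2))) has_sum (Ef q q * theta q (x * y))) UNIV"
      by (rule has_sum_cmult_right[OF theta_has_sum[OF q xy0]])
    then have "((D \<circ> (\<lambda>a. (a, a))) has_sum (Ef q q * theta q (x * y))) UNIV"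
      by (simp add: D_def o_def power_int_mult_distrib mult_ac)
    then have "(D has_sum (Ef q q * theta q (x * y))) (range (\<lambda>a. (a, a)))"
      by (subst has_sum_reindex) (auto simp: inj_on_def)
    then show ?thesis
      by (rule has_sum_cong_neutral[THEN iffD1, rotated -1]) (auto simp: D_def)
  qed
  have SS: "S = Ef q q * theta q (x * y)" using R2 R3 has_sum_unique by blast
  have "((\<lambda>ij. inverse (X * Y) * (T ij * (X * Y))) has_sum (inverse (X * Y) * S)) UNIV"
    by (rule has_sum_cmult_right[OF R1])
  moreover have "(\<lambda>ij. inverse (X * Y) * (T ij * (X * Y))) = T"
    using X0 Y0 by (auto simp: field_simps)
  ultimately have "(T has_sum (inverse (X * Y) * S)) UNIV" by simp
  then show ?thesis unfolding T_def SS X_def Y_def by (simp add: field_simps)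
qed

lemma qpoch_inf_0: "qpoch_inf 0 p = 1"
  by (simp add: qpoch_inf_def)

lemma quad_pos:
  fixes i j :: int
  assumes "(i, j) \<noteq> (0, 0)"
  shows "i^2 - i*j + j^2 \<noteq> 0"
proof
  assume h: "i^2 - i*j + j^2 = 0"
  have "4 * (i^2 - i*j + j^2) = (2*i - j)^2 + 3 * j^2" by (simp add: algebra_simps power2_eq_square)
  then have "(2*i - j)^2 + 3 * j^2 = 0" using h by simp
  then have "j^2 = 0" "(2*i - j)^2 = 0" using zero_le_power2[of j] zero_le_power2[of "2*i - j"] by linarith+
  then have "j = 0" and "2*i - j = 0" by simp_all
  then show False using assms by simp
qed

theorem theorem1p1:
  fixes q x y :: complex
  assumes "norm q < 1" and "x \<noteq> 0" and "y \<noteq> 0"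
    and "\<And>k::nat. k \<ge> 1 \<Longrightarrow> x * q ^ k \<noteq> 1"
    and "\<And>k::nat. k \<ge> 1 \<Longrightarrow> y * q ^ k \<noteq> 1"
  shows "((\<lambda>(i::int, j::int). x powi i * y powi j * q powi (i^2 - i*j + j^2)
              / (qpoch_int (x * q) q i * qpoch_int (y * q) q j))
          has_sum
          (qpoch_inf q q * qpoch_inf (- x * y * q) (q^2) * qpoch_inf (- q / (x * y)) (q^2)
             * qpoch_inf (q^2) (q^2)
           / (qpoch_inf (x * q) q * qpoch_inf (y * q) q))) UNIV"
proof (cases "q = 0")
  case True
  have rhs: "qpoch_inf q q * qpoch_inf (- x * y * q) (q^2) * qpoch_inf (- q / (x * y)) (q^2)
             * qpoch_inf (q^2) (q^2) / (qpoch_inf (x * q) q * qpoch_inf (y * q) q) = 1"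
    using True by (simp add: qpoch_inf_0)
  show ?thesis unfolding rhs
  proof (rule has_sum_finite_neutralI[where B = "{(0, 0)}"])
    show "(\<lambda>(i::int, j::int). x powi i * y powi j * q powi (i^2 - i*j + j^2)
              / (qpoch_int (x * q) q i * qpoch_int (y * q) q j)) z = 0"
      if "z \<in> UNIV - {(0, 0)}" for z
    proof -
      obtain i j where z: "z = (i, j)" by (metis prod.collapse)
      have "i^2 - i*j + j^2 \<noteq> 0" using that z quad_pos by auto
      then show ?thesis using True z by simp
    qed
  qed (simp_all add: qpoch_int_def)
next
  case False
  note q = assms(1) and q0 = False
  have p: "norm (q^2) < 1" using q by (simp add: norm_power power_less_one_iff)
  have xy0: "x * y \<noteq> 0" using assms(2,3) by simp
  have M: "((\<lambda>(i::int, j::int). x powi i * y powi j * q powi (i^2 - i*j + j^2)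
              / (qpoch_int (x * q) q i * qpoch_int (y * q) q j))
          has_sum (Ef q q * theta q (x * y) / (Ef q (x * q) * Ef q (y * q)))) UNIV"
    by (rule main_q0[OF q q0 assms(2-5)])
  have J: "theta q (x * y) = Ef (q^2) (q^2) * Ef (q^2) (- (x * y) * q) * Ef (q^2) (- q / (x * y))"
    by (rule jtp[OF q q0 xy0])
  have "qpoch_inf q q * qpoch_inf (- x * y * q) (q^2) * qpoch_inf (- q / (x * y)) (q^2)
             * qpoch_inf (q^2) (q^2) / (qpoch_inf (x * q) q * qpoch_inf (y * q) q)
      = Ef q q * theta q (x * y) / (Ef q (x * q) * Ef q (y * q))"
    unfolding J qpoch_inf_Ef[OF q] qpoch_inf_Ef[OF p] by (simp add: mult_ac)
  then show ?thesis using M by simp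
qed

end
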